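(* Let $\bar F:\mathbb{R}^n\times\mathbb{R}^q\times\mathbb{R}_{>0}\to\mathbb{R}^n$ and consider $x_{k+1}=\bar F(x_k,e_k,T_k)$. Suppose that: (i) there exists $\mathring T>0$ such that $\bar F(0,0,T)=0$ for all $T\in(0,\mathring T)$; (ii) there exists $\hat T>0$ such that for every $\epsilon>0$ there exists $\delta=\delta(\epsilon)>0$ such that $|\bar F(x,e,T)|<\epsilon$ whenever $|x|\le\delta$, $|e|\le\delta$ and $T\in(0,\hat T)$; (iii) for every $M,E\ge0$ there exist $C=C(M,E)>0$ and $\check T=\check T(M,E)>0$, with $C(\cdot,\cdot)$ nondecreasing in each variable and $\check T(\cdot,\cdot)$ nonincreasing in each variable, such that $|\bar F(x,e,T)|\le C$ for all $|x|<M$, $|e|<E$ and $T\in(0,\check T)$; (iv) there exist $N>0$, constants $K_1,K_2,K_3\ge1$, the functions $\alpha_i(s):=K_is^N$ ($i=1,2,3$), and $\rho\in\mathcal{K}$ such that for every $M,E\ge0$ there exist $\tilde T=\tilde T(M,E)>0$ and $V=V_{M,E}:\mathbb{R}^n\to\mathbb{R}_{\ge0}\cup\{\infty\}$ with $\alpha_1(|x|)\le V(x)$ for all $x\in\mathbb{R}^n$, $V(x)\le\alpha_2(|x|)$ for all $|x|\le M$, and $V(\bar F(x,e,T))-V(x)\le -T\alpha_3(|x|)$ for all $x,e$ with $\rho(|e|)\le|x|\le M$, $|e|\le E$ and all $T\in(0,\tilde T)$. Then the system $x_{k+1}=\bar F(x_k,e_k,T_k)$ is SE-ISS-VSR.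
   Context: For $T>0$, $\Phi(T)$ denotes the set of all sequences $\{T_i\}_{i=0}^\infty$ with $T_i\in(0,T)$ for all $i$; $\|\{e_i\}\|:=\sup_{i\ge0}|e_i|$. Conventions: $\sum_{i=0}^{-1}T_i=0$ and $\gamma(\sup_{0\le i\le -1}|e_i|)=0$. $\mathcal{K}$: continuous strictly increasing functions $\mathbb{R}_{\ge0}\to\mathbb{R}_{\ge0}$ vanishing at $0$; $\mathcal{K}_\infty$: unbounded members of $\mathcal{K}$. SE-ISS-VSR: there exist $K\ge1$, $\lambda>0$, $\gamma\in\mathcal{K}_\infty$ such that for all $M,E\ge0$ there exists $T^\star=T^\star(M,E)>0$ such that for all $k\in\mathbb{N}_0$, $\{T_i\}\in\Phi(T^\star)$, $|x_0|\le M$ and $\|\{e_i\}\|\le E$, solutions satisfy $|x_k|\le K|x_0|\exp(-\lambda\sum_{i=0}^{k-1}T_i)+\gamma(\sup_{0\le i\le k-1}|e_i|)$. *)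

theory Defs
  imports "HOL-Analysis.Analysis"
begin

definition class_K :: "(real \<Rightarrow> real) \<Rightarrow> bool" where
  "class_K \<gamma> \<longleftrightarrow> continuous_on {0..} \<gamma> \<and> strict_mono_on {0..} \<gamma> \<and> \<gamma> 0 = 0
     \<and> (\<forall>s\<ge>0. \<gamma> s \<ge> 0)"

definition class_K_inf :: "(real \<Rightarrow> real) \<Rightarrow> bool" where
  "class_K_inf \<gamma> \<longleftrightarrow> class_K \<gamma> \<and> (\<forall>r. \<exists>s\<ge>0. \<gamma> s > r)"

definition Phi :: "real \<Rightarrow> (nat \<Rightarrow> real) set" where
  "Phi T = {Ts. \<forall>i. 0 < Ts i \<and> Ts i < T}"

definition sup_upto :: "(nat \<Rightarrow> 'q::real_normed_vector) \<Rightarrow> nat \<Rightarrow> real" where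
  "sup_upto e k = (if k = 0 then 0 else Max ((\<lambda>i. norm (e i)) ` {..<k}))"

text \<open>Semiglobal exponential ISS under varying sampling rate for
  x_{k+1} = F(x_k, e_k, T_k).\<close>
definition SE_ISS_VSR :: "('a::real_normed_vector \<Rightarrow> 'q::real_normed_vector \<Rightarrow> real \<Rightarrow> 'a) \<Rightarrow> bool" where
  "SE_ISS_VSR F \<longleftrightarrow>
    (\<exists>K lam \<gamma>. K \<ge> 1 \<and> lam > 0 \<and> class_K_inf \<gamma> \<and>
      (\<forall>M E. M \<ge> 0 \<and> E \<ge> 0 \<longrightarrow>
        (\<exists>Tstar > 0. \<forall>Ts \<in> Phi Tstar. \<forall>e x.
           (\<forall>i. norm (e i) \<le> E) \<and> norm (x 0) \<le> M \<and>
           (\<forall>k. x (Suc k) = F (x k) (e k) (Ts k)) \<longrightarrow>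
           (\<forall>k. norm (x k) \<le> K * norm (x 0) * exp (- lam * (\<Sum>i<k. Ts i))
                              + \<gamma> (sup_upto e k)))))"

end

theory Submission
  imports Defs
begin

lemma sup_upto_0[simp]: "sup_upto e 0 = 0"
  by (simp add: sup_upto_def)

lemma sup_upto_Suc: "sup_upto e (Suc k) = max (sup_upto e k) (norm (e k))"
proof (cases "k = 0")
  case True
  have "{..<Suc 0} = {0::nat}" by auto
  then show ?thesis using True by (simp add: sup_upto_def)
next
  case False
  have img: "(\<lambda>i. norm (e i)) ` {..<Suc k} = insert (norm (e k)) ((\<lambda>i. norm (e i)) ` {..<k})"
    by (simp add: lessThan_Suc)
  then have "Max ((\<lambda>i. norm (e i)) ` {..<Suc k}) = max (norm (e k)) (Max ((\<lambda>i. norm (e i)) ` {..<k}))"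
  proof -
    have "(\<lambda>i. norm (e i)) ` {..<k} \<noteq> {}" using False by auto
    then show ?thesis unfolding img using Max_insert[of "(\<lambda>i. norm (e i)) ` {..<k}" "norm (e k)"] by simp
  qed
  then show ?thesis using False by (simp add: sup_upto_def max.commute)
qed

lemma sup_upto_nn: "0 \<le> sup_upto e k"
  by (induction k) (auto simp: sup_upto_Suc le_max_iff_disj)

lemma sup_upto_le: "(\<And>i. norm (e i) \<le> E) \<Longrightarrow> 0 \<le> E \<Longrightarrow> sup_upto e k \<le> E"
  by (induction k) (auto simp: sup_upto_Suc)

lemma classK_mono: "class_K \<rho> \<Longrightarrow> 0 \<le> s \<Longrightarrow> s \<le> t \<Longrightarrow> \<rho> s \<le> \<rho> t"
  unfolding class_K_def strict_mono_on_def
  by (metis atLeast_iff order_le_less order_trans)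

lemma classK_nn: "class_K \<rho> \<Longrightarrow> 0 \<le> s \<Longrightarrow> 0 \<le> \<rho> s"
  unfolding class_K_def by auto

lemma classK_small:
  assumes "class_K \<rho>" "\<epsilon> > 0"
  shows "\<exists>d>0. \<forall>s. 0 \<le> s \<and> s \<le> d \<longrightarrow> \<rho> s \<le> \<epsilon>"
proof -
  have c: "continuous_on {0..} \<rho>" and z: "\<rho> 0 = 0" using assms(1) unfolding class_K_def by auto
  obtain d where d: "d > 0" "\<forall>x'\<in>{0..}. dist x' 0 < d \<longrightarrow> dist (\<rho> x') (\<rho> 0) < \<epsilon>"
    using c assms(2) unfolding continuous_on_iff by (meson atLeast_iff order_refl)
  show ?thesis
  proof (intro exI[of _ "d/2"] conjI allI impI)
    show "d/2 > 0" using d by simp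
    fix s :: real assume "0 \<le> s \<and> s \<le> d/2"
    then have "dist (\<rho> s) (\<rho> 0) < \<epsilon>" using d by (auto simp: dist_real_def)
    then show "\<rho> s \<le> \<epsilon>" using z by (simp add: dist_real_def)
  qed
qed

lemma classKinf_scale:
  assumes "c > 0" "class_K_inf g"
  shows "class_K_inf (\<lambda>s. c * g s)"
proof -
  have g: "continuous_on {0..} g" "strict_mono_on {0..} g" "g 0 = 0" "\<forall>s\<ge>0. g s \<ge> 0"
    "\<forall>r. \<exists>s\<ge>0. g s > r"
    using assms(2) unfolding class_K_inf_def class_K_def by auto
  have "continuous_on {0..} (\<lambda>s. c * g s)" using g(1) by (intro continuous_intros)
  moreover have "strict_mono_on {0..} (\<lambda>s. c * g s)"
    using g(2) assms(1) unfolding strict_mono_on_def by auto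
  moreover have "\<forall>r. \<exists>s\<ge>0. c * g s > r"
  proof
    fix r
    obtain s where "s \<ge> 0" "g s > r / c" using g(5) by blast
    then show "\<exists>s\<ge>0. c * g s > r" using assms(1) by (intro exI[of _ s]) (auto simp: field_simps)
  qed
  ultimately show ?thesis using g(3,4) assms(1) unfolding class_K_inf_def class_K_def by auto
qed

lemma root_bound:
  fixes y B N K1 K2 :: real
  assumes "N > 0" "K1 > 0" "K2 \<ge> 0" "y \<ge> 0" "B \<ge> 0" "K1 * y powr N \<le> K2 * B powr N"
  shows "y \<le> (K2/K1) powr (1/N) * B"
proof -
  have "y powr N \<le> (K2/K1) * B powr N" using assms(2,6) by (simp add: field_simps)
  then have "(y powr N) powr (1/N) \<le> ((K2/K1) * B powr N) powr (1/N)"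
    using assms by (intro powr_mono2) auto
  also have "\<dots> = (K2/K1) powr (1/N) * (B powr N) powr (1/N)"
    using assms by (subst powr_mult) auto
  finally show ?thesis using assms by (simp add: powr_powr)
qed

lemma exp_powr_eq: "exp (a::real) powr N = exp (a * N)"
proof -
  have "exp a powr N = exp (N * ln (exp a))" by (simp add: powr_def)
  also have "\<dots> = exp (a * N)" by (simp only: ln_exp mult.commute)
  finally show ?thesis .
qed

lemma ereal_diff_le: "a - ereal v \<le> ereal c \<Longrightarrow> a \<le> ereal (v + c)"
  by (cases a) auto


lemma Kinf_majorant:
  fixes h :: "real \<Rightarrow> real"
  assumes mono: "\<And>s t. 0 \<le> s \<Longrightarrow> s \<le> t \<Longrightarrow> h s \<le> h t"
    and nn: "\<And>s. 0 \<le> s \<Longrightarrow> 0 \<le> h s"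
    and lim: "\<And>\<epsilon>. \<epsilon> > 0 \<Longrightarrow> \<exists>d>0. \<forall>s. 0 \<le> s \<and> s \<le> d \<longrightarrow> h s \<le> \<epsilon>"
  shows "\<exists>\<gamma>. class_K_inf \<gamma> \<and> (\<forall>s\<ge>0. h s \<le> \<gamma> s)"
proof -
  have h0: "h 0 = 0"
  proof -
    have "h 0 \<le> \<epsilon>" if "\<epsilon> > 0" for \<epsilon> using lim[OF that] by auto
    then have "h 0 \<le> 0" by (meson dense not_le)
    with nn[of 0] show ?thesis by simp
  qed
  have integ: "h integrable_on {a..b}" if "0 \<le> a" for a b
    by (rule integrable_on_mono_on, rule mono_onI, rule mono) (use that in auto)
  define Gi where "Gi t = integral {0..t} h" for t
  define I where "I s = integral {1..2} (\<lambda>u. h (s * u))" for s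
  define \<gamma> where "\<gamma> s = s + (Gi (2 * s) - Gi s) / s" for s
  have F2: "Gi (2 * s) - Gi s = integral {s..2 * s} h" if "s > 0" for s
    using Henstock_Kurzweil_Integration.integral_combine[where f=h and a=0 and c=s and b="2 * s"] integ[of 0 "2 * s"] that unfolding Gi_def by auto
  have F3: "s * h s \<le> integral {s..2 * s} h \<and> integral {s..2 * s} h \<le> s * h (2 * s)" if "s > 0" for s
  proof
    have "integral {s..2 * s} (\<lambda>_. h s) \<le> integral {s..2 * s} h"
      by (rule integral_le[OF integrable_const_ivl integ], use that in simp, rule mono) (use that in auto)
    then show "s * h s \<le> integral {s..2 * s} h" using that by simp
    have "integral {s..2 * s} h \<le> integral {s..2 * s} (\<lambda>_. h (2 * s))"
      by (rule integral_le[OF integ integrable_const_ivl], use that in simp, rule mono) (use that in auto)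
    then show "integral {s..2 * s} h \<le> s * h (2 * s)" using that by simp
  qed
  have F4: "integral {s..2 * s} h = s * I s" if "s > 0" for s
  proof -
    have img: "(\<lambda>x. x / s) ` {s..2 * s} = {1..2}"
    proof
      show "(\<lambda>x. x / s) ` {s..2 * s} \<subseteq> {1..2}" using that by (auto simp: field_simps)
      show "{1..2} \<subseteq> (\<lambda>x. x / s) ` {s..2 * s}"
      proof
        fix u assume "u \<in> {1..(2::real)}"
        then have "s * u \<in> {s..2 * s}" "u = (s*u)/s" using that by auto
        then show "u \<in> (\<lambda>x. x / s) ` {s..2 * s}" by blast
      qed
    qed
    have "integral ((\<lambda>x. x / s) ` {s..2 * s}) (\<lambda>x. h (s * x)) = (1 / \<bar>s\<bar>) *\<^sub>R integral {s..2 * s} h"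
      by (rule integral_stretch_real) (use that in auto)
    then show ?thesis using that unfolding img I_def by (auto simp: field_simps)
  qed
  have F5: "I s \<le> I t" if "0 < s" "s \<le> t" for s t
    unfolding I_def
  proof (rule integral_le)
    show "(\<lambda>u. h (s * u)) integrable_on {1..2}"
      by (rule integrable_on_mono_on, rule mono_onI, rule mono) (use that in \<open>auto intro: mult_left_mono\<close>)
    show "(\<lambda>u. h (t * u)) integrable_on {1..2}"
      by (rule integrable_on_mono_on, rule mono_onI, rule mono) (use that in \<open>auto intro: mult_left_mono\<close>)
    show "h (s * u) \<le> h (t * u)" if "u \<in> {1..2}" for u
    proof (rule mono)
      show "0 \<le> s * u" using \<open>0 < s\<close> that by simp
      show "s * u \<le> t * u" using \<open>s \<le> t\<close> that by (simp add: mult_right_mono)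
    qed
  qed
  have gpos: "\<gamma> s = s + I s" if "s > 0" for s
    using F2 F4 that unfolding \<gamma>_def by simp
  have Ibd: "h s \<le> I s \<and> I s \<le> h (2 * s)" if "s > 0" for s
    using F3[OF that] F4[OF that] that by (auto simp: mult_le_cancel_left)
  have g0: "\<gamma> 0 = 0" unfolding \<gamma>_def by simp
  have hle: "h s \<le> \<gamma> s" if "s \<ge> 0" for s
  proof (cases "s = 0")
    case True then show ?thesis using h0 g0 by simp
  next
    case False
    then have sp: "s > 0" using that by simp
    show ?thesis using gpos[OF sp] Ibd[OF sp] sp by linarith
  qed
  have gnn: "\<gamma> s \<ge> 0" if "s \<ge> 0" for s
    using hle[OF that] nn[OF that] by simp
  have smono: "strict_mono_on {0..} \<gamma>"
  proof (rule strict_mono_onI)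
    fix s t :: real assume st: "s \<in> {0..}" "t \<in> {0..}" "s < t"
    show "\<gamma> s < \<gamma> t"
    proof (cases "s = 0")
      case True
      have tp: "t > 0" using st True by simp
      have "0 \<le> h t" using nn tp by simp
      then show ?thesis using True tp gpos[OF tp] Ibd[OF tp] g0 by simp
    next
      case False
      have sp: "s > 0" "t > 0" using st False by auto
      show ?thesis using gpos[OF sp(1)] gpos[OF sp(2)] F5[of s t] sp st by linarith
    qed
  qed
  have Gcont: "isCont Gi x" if "x > 0" for x
  proof -
    have "continuous_on {0..x+1} Gi" unfolding Gi_def
      by (rule indefinite_integral_continuous_1) (rule integ, simp)
    moreover have "x \<in> interior {0..x+1}" using that by simp
    ultimately show ?thesis using continuous_on_interior by blast
  qed
  have cont: "continuous_on {0..} \<gamma>"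
  proof (clarsimp simp: continuous_on_eq_continuous_within)
    fix x :: real assume x: "0 \<le> x"
    show "continuous (at x within {0..}) \<gamma>"
    proof (cases "x = 0")
      case False
      then have xp: "x > 0" using x by simp
      have "isCont (\<lambda>s. Gi (2 * s)) x"
        by (rule isCont_o2[where f="\<lambda>s. 2 * s" and g=Gi]) (use Gcont[of "2 * x"] xp in auto)
      then have "isCont \<gamma> x" unfolding \<gamma>_def using Gcont[OF xp] xp
        by (intro continuous_intros) auto
      then show ?thesis using continuous_at_imp_continuous_at_within by blast
    next
      case True
      have "(\<gamma> \<longlongrightarrow> 0) (at 0 within {0..})"
      proof (rule tendstoI)
        fix e :: real assume e: "e > 0"
        obtain d where d: "d > 0" "\<forall>s. 0 \<le> s \<and> s \<le> d \<longrightarrow> h s \<le> e/2"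
          using lim[of "e/2"] e by auto
        have "\<forall>s\<in>{0..}. s \<noteq> 0 \<and> dist s 0 < min (d/2) (e/2) \<longrightarrow> dist (\<gamma> s) 0 < e"
        proof (intro ballI impI)
          fix s :: real assume s: "s \<in> {0..}" "s \<noteq> 0 \<and> dist s 0 < min (d/2) (e/2)"
          then have sp: "s > 0" by auto
          have "h (2 * s) \<le> e/2" using d s by auto
          then have "\<gamma> s < e" using gpos[OF sp] Ibd[OF sp] s by auto
          then show "dist (\<gamma> s) 0 < e" using gnn[of s] sp by simp
        qed
        then show "\<forall>\<^sub>F s in at 0 within {0..}. dist (\<gamma> s) 0 < e"
          unfolding eventually_at using d e by (intro exI[of _ "min (d/2) (e/2)"]) auto
      qed
      then show ?thesis using True g0 unfolding continuous_within by simp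
    qed
  qed
  have unb: "\<forall>r. \<exists>s\<ge>0. \<gamma> s > r"
  proof
    fix r :: real
    let ?s = "max 0 r + 1"
    have "\<gamma> ?s = ?s + I ?s" by (rule gpos) simp
    moreover have "I ?s \<ge> 0"
    proof -
      have p: "?s > 0" by simp
      show ?thesis using Ibd[OF p] nn[of ?s] by linarith
    qed
    ultimately show "\<exists>s\<ge>0. \<gamma> s > r" by (intro exI[of _ ?s]) auto
  qed
  have "class_K_inf \<gamma>"
    unfolding class_K_inf_def class_K_def using cont smono g0 gnn unb by auto
  then show ?thesis using hle by blast
qed

theorem theorem2:
  fixes F :: "real^'n \<Rightarrow> real^'q \<Rightarrow> real \<Rightarrow> real^'n"
  assumes i: "\<exists>T0 > 0. \<forall>T. 0 < T \<and> T < T0 \<longrightarrow> F 0 0 T = 0"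
  and ii: "\<exists>Th > 0. \<forall>\<epsilon> > 0. \<exists>\<delta> > 0. \<forall>x e T.
              norm x \<le> \<delta> \<and> norm e \<le> \<delta> \<and> 0 < T \<and> T < Th \<longrightarrow> norm (F x e T) < \<epsilon>"
  and iii: "\<exists>C Tc :: real \<Rightarrow> real \<Rightarrow> real.
              (\<forall>M M' E. 0 \<le> M \<and> M \<le> M' \<and> 0 \<le> E \<longrightarrow> C M E \<le> C M' E \<and> Tc M' E \<le> Tc M E) \<and>
              (\<forall>M E E'. 0 \<le> M \<and> 0 \<le> E \<and> E \<le> E' \<longrightarrow> C M E \<le> C M E' \<and> Tc M E' \<le> Tc M E) \<and>
              (\<forall>M E. 0 \<le> M \<and> 0 \<le> E \<longrightarrow> C M E > 0 \<and> Tc M E > 0 \<and>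
                 (\<forall>x e T. norm x < M \<and> norm e < E \<and> 0 < T \<and> T < Tc M E \<longrightarrow> norm (F x e T) \<le> C M E))"
  and iv: "\<exists>(N::real) K1 K2 K3 \<rho>. N > 0 \<and> K1 \<ge> 1 \<and> K2 \<ge> 1 \<and> K3 \<ge> 1 \<and> class_K \<rho> \<and>
              (\<forall>M E. 0 \<le> M \<and> 0 \<le> E \<longrightarrow>
                (\<exists>Tt > 0. \<exists>V :: real^'n \<Rightarrow> ereal.
                   (\<forall>x. V x \<ge> 0) \<and>
                   (\<forall>x. ereal (K1 * norm x powr N) \<le> V x) \<and>
                   (\<forall>x. norm x \<le> M \<longrightarrow> V x \<le> ereal (K2 * norm x powr N)) \<and>
                   (\<forall>x e T. \<rho> (norm e) \<le> norm x \<and> norm x \<le> M \<and> norm e \<le> E \<and> 0 < T \<and> T < Tt \<longrightarrow>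
                       V (F x e T) - V x \<le> ereal (- T * (K3 * norm x powr N)))))"
  shows "SE_ISS_VSR F"
proof -
  obtain T0 where T0: "T0 > 0" "\<And>T. 0 < T \<Longrightarrow> T < T0 \<Longrightarrow> F 0 0 T = 0" using i by (elim exE conjE) (rule that; auto)
  obtain Th where Th: "Th > 0" and dl: "\<And>\<epsilon>. \<epsilon> > 0 \<Longrightarrow> \<exists>\<delta> > 0. \<forall>x e T.
              norm x \<le> \<delta> \<and> norm e \<le> \<delta> \<and> 0 < T \<and> T < Th \<longrightarrow> norm (F x e T) < \<epsilon>"
    using ii by (elim exE conjE) (rule that; auto)
  obtain C Tc :: "real \<Rightarrow> real \<Rightarrow> real" where
    Cm1: "\<forall>M M' E. 0 \<le> M \<and> M \<le> M' \<and> 0 \<le> E \<longrightarrow> C M E \<le> C M' E \<and> Tc M' E \<le> Tc M E" and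
    Cm2: "\<forall>M E E'. 0 \<le> M \<and> 0 \<le> E \<and> E \<le> E' \<longrightarrow> C M E \<le> C M E' \<and> Tc M E' \<le> Tc M E" and
    Cb: "\<forall>M E. 0 \<le> M \<and> 0 \<le> E \<longrightarrow> C M E > 0 \<and> Tc M E > 0 \<and>
                 (\<forall>x e T. norm x < M \<and> norm e < E \<and> 0 < T \<and> T < Tc M E \<longrightarrow> norm (F x e T) \<le> C M E)"
    using iii by (elim exE conjE) (rule that; assumption)
  obtain N K1 K2 K3 :: real and \<rho> where
    NK: "N > 0" "K1 \<ge> 1" "K2 \<ge> 1" "K3 \<ge> 1" and rho: "class_K \<rho>" and
    Vex: "\<forall>M E. 0 \<le> M \<and> 0 \<le> E \<longrightarrow>
                (\<exists>Tt > 0. \<exists>V :: real^'n \<Rightarrow> ereal.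
                   (\<forall>x. V x \<ge> 0) \<and>
                   (\<forall>x. ereal (K1 * norm x powr N) \<le> V x) \<and>
                   (\<forall>x. norm x \<le> M \<longrightarrow> V x \<le> ereal (K2 * norm x powr N)) \<and>
                   (\<forall>x e T. \<rho> (norm e) \<le> norm x \<and> norm x \<le> M \<and> norm e \<le> E \<and> 0 < T \<and> T < Tt \<longrightarrow>
                       V (F x e T) - V x \<le> ereal (- T * (K3 * norm x powr N))))"
    using iv by (elim exE conjE) (rule that; assumption)
  have rmono: "\<And>s t. 0 \<le> s \<Longrightarrow> s \<le> t \<Longrightarrow> \<rho> s \<le> \<rho> t" using classK_mono[OF rho] by blast
  have rnn: "\<And>s. 0 \<le> s \<Longrightarrow> 0 \<le> \<rho> s" using classK_nn[OF rho] by blast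
  have r0: "\<rho> 0 = 0" using rho unfolding class_K_def by auto
  define Tg where "Tg s = min T0 (min Th (Tc (\<rho> s + 1) (s + 1)))" for s
  have Tg_pos: "Tg s > 0" if "0 \<le> s" for s
    using T0 Th Cb rnn[OF that] that unfolding Tg_def by auto
  have Tg_anti: "Tg t \<le> Tg s" if "0 \<le> s" "s \<le> t" for s t
  proof -
    have "Tc (\<rho> t + 1) (t + 1) \<le> Tc (\<rho> s + 1) (t + 1)"
      using Cm1 rmono[OF that] rnn[OF that(1)] that by auto
    also have "\<dots> \<le> Tc (\<rho> s + 1) (s + 1)"
      using Cm2 rnn[OF that(1)] that by auto
    finally show ?thesis unfolding Tg_def by auto
  qed
  define S where "S s = {norm (F x e T) | x e T. norm e \<le> s \<and> norm x \<le> \<rho> (norm e) \<and> 0 < T \<and> T < Tg (norm e)}" for s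
  define h0 where "h0 s = Sup (S s)" for s
  have Sbd: "y \<le> C (\<rho> s + 1) (s + 1)" if s0: "0 \<le> s" and yS: "y \<in> S s" for s y
  proof -
    obtain x e T where y: "y = norm (F x e T)" "norm e \<le> s" "norm x \<le> \<rho> (norm e)" "0 < T" "T < Tg (norm e)"
      using yS unfolding S_def by blast
    have ne: "0 \<le> norm e" by simp
    have "T < Tc (\<rho> (norm e) + 1) (norm e + 1)" using y(5) unfolding Tg_def by auto
    then have "y \<le> C (\<rho> (norm e) + 1) (norm e + 1)"
      using Cb rnn[OF ne] y by auto
    also have "\<dots> \<le> C (\<rho> s + 1) (norm e + 1)"
      using Cm1 rmono[OF ne y(2)] rnn[OF ne] by auto
    also have "\<dots> \<le> C (\<rho> s + 1) (s + 1)"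
      using Cm2 rnn[OF s0] y(2) by auto
    finally show ?thesis .
  qed
  have Sne: "0 \<in> S s" if "0 \<le> s" for s
  proof -
    define T where "T = Tg 0 / 2"
    have T: "0 < T" "T < Tg 0" using Tg_pos[of 0] unfolding T_def by auto
    then have "T < T0" unfolding Tg_def by auto
    then have "norm (F 0 0 T) = 0" using T0 T by simp
    moreover have "norm (0::real^'q) \<le> s \<and> norm (0::real^'n) \<le> \<rho> (norm (0::real^'q)) \<and> 0 < T \<and> T < Tg (norm (0::real^'q))"
      using that T r0 by simp
    ultimately show ?thesis unfolding S_def by (metis (mono_tags, lifting) mem_Collect_eq)
  qed
  have bddS: "bdd_above (S s)" if "0 \<le> s" for s
    using Sbd[OF that] by (intro bdd_aboveI) 
  have h0_upper: "y \<le> h0 s" if "0 \<le> s" "y \<in> S s" for s y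
    unfolding h0_def using bddS[OF that(1)] that(2) by (simp add: cSup_upper)
  have h0_nn: "0 \<le> h0 s" if "0 \<le> s" for s
    using h0_upper[OF that Sne[OF that]] .
  have h0_mono: "h0 s \<le> h0 t" if "0 \<le> s" "s \<le> t" for s t
    unfolding h0_def
  proof (rule cSup_subset_mono)
    show "S s \<noteq> {}" using Sne[OF that(1)] by blast
    show "bdd_above (S t)" using bddS that by simp
    show "S s \<subseteq> S t" unfolding S_def using that(2) by fastforce
  qed
  have h0_lim: "\<exists>d>0. \<forall>s. 0 \<le> s \<and> s \<le> d \<longrightarrow> h0 s \<le> \<epsilon>" if ep: "\<epsilon> > 0" for \<epsilon>
  proof -
    obtain \<delta> where dlt: "\<delta> > 0" "\<forall>x e T. norm x \<le> \<delta> \<and> norm e \<le> \<delta> \<and> 0 < T \<and> T < Th \<longrightarrow> norm (F x e T) < \<epsilon>"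
      using dl[OF ep] by blast
    obtain d1 where d1: "d1 > 0" "\<forall>s. 0 \<le> s \<and> s \<le> d1 \<longrightarrow> \<rho> s \<le> \<delta>"
      using classK_small[OF rho dlt(1)] by blast
    show ?thesis
    proof (intro exI[of _ "min d1 \<delta>"] conjI allI impI)
      show "min d1 \<delta> > 0" using d1 dlt by simp
      fix s assume s: "0 \<le> s \<and> s \<le> min d1 \<delta>"
      show "h0 s \<le> \<epsilon>" unfolding h0_def
      proof (rule cSup_least)
        show "S s \<noteq> {}" using Sne s by blast
        fix y assume "y \<in> S s"
        then obtain x e T where y: "y = norm (F x e T)" "norm e \<le> s" "norm x \<le> \<rho> (norm e)" "0 < T" "T < Tg (norm e)"
          unfolding S_def by blast
        have "\<rho> (norm e) \<le> \<rho> s" using rmono y(2) by simp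
        moreover have "\<rho> s \<le> \<delta>" using d1 s by auto
        moreover have "T < Th" using y(5) unfolding Tg_def by auto
        ultimately have "norm (F x e T) < \<epsilon>" using dlt(2) y s by auto
        then show "y \<le> \<epsilon>" using y by simp
      qed
    qed
  qed
  define hh where "hh s = max (h0 s) (\<rho> s)" for s
  have "\<exists>\<gamma>. class_K_inf \<gamma> \<and> (\<forall>s\<ge>0. hh s \<le> \<gamma> s)"
  proof (rule Kinf_majorant)
    show "hh s \<le> hh t" if "0 \<le> s" "s \<le> t" for s t
      unfolding hh_def using h0_mono[OF that] rmono[OF that] by auto
    show "0 \<le> hh s" if "0 \<le> s" for s
      unfolding hh_def using h0_nn[OF that] by auto
    show "\<exists>d>0. \<forall>s. 0 \<le> s \<and> s \<le> d \<longrightarrow> hh s \<le> \<epsilon>" if ep2: "\<epsilon> > 0" for \<epsilon>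
    proof -
      obtain d1 where d1: "d1 > 0" "\<forall>s. 0 \<le> s \<and> s \<le> d1 \<longrightarrow> h0 s \<le> \<epsilon>" using h0_lim[OF ep2] by blast
      obtain d2 where d2: "d2 > 0" "\<forall>s. 0 \<le> s \<and> s \<le> d2 \<longrightarrow> \<rho> s \<le> \<epsilon>" using classK_small[OF rho ep2] by blast
      show ?thesis using d1 d2 unfolding hh_def by (intro exI[of _ "min d1 d2"]) auto
    qed
  qed
  then obtain \<gamma>0 where g0K: "class_K_inf \<gamma>0" and g0h: "\<forall>s\<ge>0. hh s \<le> \<gamma>0 s" by blast
  have g0mono: "\<And>s t. 0 \<le> s \<Longrightarrow> s \<le> t \<Longrightarrow> \<gamma>0 s \<le> \<gamma>0 t"
    using classK_mono g0K unfolding class_K_inf_def by blast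
  have g0nn: "\<And>s. 0 \<le> s \<Longrightarrow> 0 \<le> \<gamma>0 s"
    using classK_nn g0K unfolding class_K_inf_def by blast
  have g00: "\<gamma>0 0 = 0" using g0K unfolding class_K_inf_def class_K_def by auto
  define K where "K = max 1 ((K2/K1) powr (1/N))"
  define lam where "lam = K3 / (K2 * N)"
  have K1: "K \<ge> 1" unfolding K_def by simp
  have lamp: "lam > 0" unfolding lam_def using NK by simp
  have lamN: "lam * N = K3 / K2" unfolding lam_def using NK by simp
  have gK: "class_K_inf (\<lambda>s. K * \<gamma>0 s)" using classKinf_scale[OF _ g0K] K1 by simp
  show ?thesis unfolding SE_ISS_VSR_def
  proof (rule exI[of _ K], rule exI[of _ lam], rule exI[of _ "\<lambda>s. K * \<gamma>0 s"], intro conjI K1 lamp gK allI impI)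
    fix M E :: real assume ME: "0 \<le> M \<and> 0 \<le> E"
    define R where "R = max M (\<gamma>0 E)"
    define M' where "M' = K * R"
    have R0: "0 \<le> R" unfolding R_def using ME by (auto simp: le_max_iff_disj)
    have RM': "R \<le> M'" unfolding M'_def using K1 R0 by (simp add: mult_le_cancel_right1)
    have M'0: "0 \<le> M'" using R0 RM' by simp
    have ME': "0 \<le> M' \<and> 0 \<le> E" using M'0 ME by simp
    obtain Tt V where Tt: "Tt > 0" and Vnn: "\<forall>x. V x \<ge> 0" and
      Vlo: "\<forall>x. ereal (K1 * norm x powr N) \<le> V x" and
      Vhi: "\<forall>x. norm x \<le> M' \<longrightarrow> V x \<le> ereal (K2 * norm x powr N)" and
      Vdec: "\<forall>x e T. \<rho> (norm e) \<le> norm x \<and> norm x \<le> M' \<and> norm e \<le> E \<and> 0 < T \<and> T < Tt \<longrightarrow>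
                       V (F x e T) - V x \<le> ereal (- T * (K3 * norm x powr N))"
      using mp[OF spec[OF spec[OF Vex, of M'], of E] ME'] by (elim exE conjE) (rule that; assumption)
    show "\<exists>Tstar>0. \<forall>Ts\<in>Phi Tstar. \<forall>e x. (\<forall>i. norm (e i) \<le> E) \<and> norm (x 0) \<le> M \<and>
           (\<forall>k. x (Suc k) = F (x k) (e k) (Ts k)) \<longrightarrow>
           (\<forall>k. norm (x k) \<le> K * norm (x 0) * exp (- lam * (\<Sum>i<k. Ts i)) + (\<lambda>s. K * \<gamma>0 s) (sup_upto e k))"
    proof (intro exI[of _ "min Tt (Tg E)"] conjI ballI allI impI)
      show "min Tt (Tg E) > 0" using Tt Tg_pos ME by simp
      fix Ts e and x :: "nat \<Rightarrow> real^'n" and k :: nat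
      assume Ts: "Ts \<in> Phi (min Tt (Tg E))"
      assume hyp: "(\<forall>i. norm (e i) \<le> E) \<and> norm (x 0) \<le> M \<and> (\<forall>k. x (Suc k) = F (x k) (e k) (Ts k))"
      have eE: "\<And>i. norm (e i) \<le> E" and x0M: "norm (x 0) \<le> M" and xs: "\<And>k. x (Suc k) = F (x k) (e k) (Ts k)"
        using hyp by auto
      have Tsp: "\<And>i. 0 < Ts i" and TsT: "\<And>i. Ts i < Tt" and TsG: "\<And>i. Ts i < Tg E"
        using Ts unfolding Phi_def by auto
      define Sg where "Sg k = (\<Sum>i<k. Ts i)" for k
      define B where "B k = max (exp (- lam * Sg k) * norm (x 0)) (\<gamma>0 (sup_upto e k))" for k
      have Sg0: "0 \<le> Sg k" for k unfolding Sg_def using Tsp by (simp add: sum_nonneg less_imp_le)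
      have B0: "0 \<le> B k" for k unfolding B_def using g0nn[OF sup_upto_nn, of e k] by (simp add: le_max_iff_disj)
      have BR: "B k \<le> R" for k
      proof -
        have "exp (- lam * Sg k) \<le> 1" using lamp Sg0[of k] by (simp add: mult_nonneg_nonneg)
        then have "exp (- lam * Sg k) * norm (x 0) \<le> M" using x0M
          by (meson mult_left_le_one_le norm_ge_zero exp_ge_zero order_trans)
        moreover have "\<gamma>0 (sup_upto e k) \<le> \<gamma>0 E"
          using g0mono[OF sup_upto_nn sup_upto_le[OF eE]] ME by simp
        ultimately show ?thesis unfolding B_def R_def by auto
      qed
      have fromV: "norm (x k) \<le> K * B k" if "V (x k) \<le> ereal (K2 * B k powr N)" for k
      proof -
        have "ereal (K1 * norm (x k) powr N) \<le> ereal (K2 * B k powr N)"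
          using Vlo that order_trans by blast
        then have "K1 * norm (x k) powr N \<le> K2 * B k powr N" by simp
        then have "norm (x k) \<le> (K2/K1) powr (1/N) * B k"
          using NK B0[of k] by (intro root_bound) auto
        also have "\<dots> \<le> K * B k" unfolding K_def using B0[of k] by (simp add: mult_right_mono)
        finally show ?thesis .
      qed
      have claim: "V (x k) \<le> ereal (K2 * B k powr N)" for k
      proof (induction k)
        case 0
        have "B 0 = norm (x 0)" unfolding B_def Sg_def using g00 by simp
        moreover have "norm (x 0) \<le> M'" using x0M RM' unfolding R_def by simp
        ultimately show ?case using Vhi by simp
      next
        case (Suc k)
        have xk: "norm (x k) \<le> M'"
          using fromV[OF Suc.IH] BR[of k] K1 unfolding M'_def by (meson mult_left_mono order_trans zero_le_one order_trans[OF zero_le_one K1])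
        define T where "T = Ts k"
        have T: "0 < T" "T < Tt" "T < Tg E" using Tsp TsT TsG unfolding T_def by auto
        have SgS: "Sg (Suc k) = Sg k + T" unfolding Sg_def T_def by simp
        have supS: "sup_upto e (Suc k) = max (sup_upto e k) (norm (e k))" by (rule sup_upto_Suc)
        have gek: "\<gamma>0 (norm (e k)) \<le> B (Suc k)"
          unfolding B_def supS using g0mono[of "norm (e k)" "max (sup_upto e k) (norm (e k))"] by simp
        show ?case
        proof (cases "\<rho> (norm (e k)) \<le> norm (x k)")
          case True
          have dec: "V (x (Suc k)) - V (x k) \<le> ereal (- T * (K3 * norm (x k) powr N))"
            using Vdec True xk eE T unfolding xs T_def by blast
          have vhi: "V (x k) \<le> ereal (K2 * norm (x k) powr N)" using Vhi xk by blast
          obtain v where v: "V (x k) = ereal v"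
            using vhi Vnn[rule_format, of "x k"] by (cases "V (x k)") auto
          have v0: "0 \<le> v" using Vnn v by (metis ereal_less_eq(5))
          have vle: "v \<le> K2 * norm (x k) powr N" using vhi v by simp
          have vB: "v \<le> K2 * B k powr N" using Suc.IH v by simp
          have "V (x (Suc k)) \<le> ereal (v + - T * (K3 * norm (x k) powr N))"
            using ereal_diff_le dec v by metis
          moreover have "v + - T * (K3 * norm (x k) powr N) \<le> K2 * B (Suc k) powr N"
          proof -
            have "T * (K3 * v / K2) \<le> T * (K3 * norm (x k) powr N)"
              using vle NK T by (intro mult_left_mono) (auto simp: field_simps)
            then have "v + - T * (K3 * norm (x k) powr N) \<le> v * (1 + - (T * K3 / K2))"
              by (simp add: algebra_simps)
            also have "\<dots> \<le> v * exp (- (T * K3 / K2))"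
              using v0 exp_ge_add_one_self[of "- (T * K3 / K2)"] by (intro mult_left_mono) auto
            also have "\<dots> \<le> K2 * B k powr N * exp (- (T * K3 / K2))"
              using vB by (intro mult_right_mono) auto
            also have "exp (- (T * K3 / K2)) = exp (- lam * T) powr N"
            proof -
              have "T * K3 / K2 = T * (lam * N)" using lamN by simp
              then show ?thesis by (simp add: exp_powr_eq algebra_simps)
            qed
            also have "K2 * B k powr N * exp (- lam * T) powr N = K2 * (exp (- lam * T) * B k) powr N"
              using B0[of k] by (simp add: powr_mult)
            also have "\<dots> \<le> K2 * B (Suc k) powr N"
            proof -
              have e1: "exp (- lam * T) \<le> 1" using lamp T by (simp add: mult_nonneg_nonneg)
              have a: "exp (- lam * T) * (exp (- lam * Sg k) * norm (x 0)) \<le> B (Suc k)"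
                unfolding B_def SgS by (simp add: algebra_simps exp_add[symmetric] distrib_left)
              have b: "exp (- lam * T) * \<gamma>0 (sup_upto e k) \<le> B (Suc k)"
              proof -
                have "exp (- lam * T) * \<gamma>0 (sup_upto e k) \<le> \<gamma>0 (sup_upto e k)"
                  using e1 g0nn[OF sup_upto_nn, of e k] by (intro mult_left_le_one_le) auto
                also have "\<dots> \<le> \<gamma>0 (sup_upto e (Suc k))"
                  unfolding supS by (rule g0mono[OF sup_upto_nn]) simp
                finally show ?thesis unfolding B_def by simp
              qed
              have "exp (- lam * T) * B k \<le> B (Suc k)"
                using a b unfolding B_def[of k] by (simp add: max_def)
              then show ?thesis using NK B0 by (intro mult_left_mono powr_mono2) auto
            qed
            finally show ?thesis .
          qed
          ultimately show ?thesis by (meson ereal_less_eq(3) order_trans)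
        next
          case False
          have Tg: "T < Tg (norm (e k))" using T(3) Tg_anti[of "norm (e k)" E] eE by force
          have "norm (x (Suc k)) \<in> S (norm (e k))"
            unfolding S_def xs T_def[symmetric] using False Tg T by fastforce
          then have "norm (x (Suc k)) \<le> h0 (norm (e k))" using h0_upper by simp
          also have "\<dots> \<le> \<gamma>0 (norm (e k))" using g0h unfolding hh_def by fastforce
          finally have xs1: "norm (x (Suc k)) \<le> \<gamma>0 (norm (e k))" .
          have "\<gamma>0 (norm (e k)) \<le> M'" using g0mono[OF norm_ge_zero eE[of k]] RM' unfolding R_def by (meson max.cobounded2 order_trans)
          then have "V (x (Suc k)) \<le> ereal (K2 * norm (x (Suc k)) powr N)" using Vhi xs1 by auto
          also have "\<dots> \<le> ereal (K2 * B (Suc k) powr N)"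
            using xs1 gek NK by (simp add: powr_mono2)
          finally show ?thesis .
        qed
      qed
      have "norm (x k) \<le> K * B k" using fromV claim by blast
      also have "\<dots> \<le> K * (exp (- lam * Sg k) * norm (x 0) + \<gamma>0 (sup_upto e k))"
        unfolding B_def using K1 g0nn[OF sup_upto_nn] by (intro mult_left_mono) auto
      finally show "norm (x k) \<le> K * norm (x 0) * exp (- lam * (\<Sum>i<k. Ts i)) + K * \<gamma>0 (sup_upto e k)"
        unfolding Sg_def by (simp add: algebra_simps)
    qed
  qed
qed

end
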